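(* Let $L\in\mathbb N$, $L\ge2$, ${\bf A}\in\mathbb R^{M\times N}$, ${\bf b}\in\mathbb R^M$, and let $(r,{\bf u})$ follow the weight-normalized gradient flow with learning rates $\eta_r(t)=r(t)^2$, $\eta_{\bf u}=1$, with $r(0)>0$, ${\bf u}(0)>0$, $\|{\bf u}(0)\|_2=1$. Put ${\bf x}=\frac{r}{\|{\bf u}\|_2}{\bf u}$ and $\tilde{\bf x}={\bf x}^{\odot L}$. Define $F:\mathbb R_+^N\to\mathbb R$ by $F(\tilde{\bf x})=\frac12\langle\tilde{\bf x}\odot\log(\tilde{\bf x})-\tilde{\bf x},\mathbf 1\rangle$ if $L=2$ (with $0\log0=0$) and $F(\tilde{\bf x})=\frac{L}{2(2-L)}\langle\tilde{\bf x}^{\odot\frac2L},\mathbf 1\rangle$ if $L>2$, and its Bregman divergence $D_F({\bf p},{\bf q})=F({\bf p})-F({\bf q})-\langle\nabla F({\bf q}),{\bf p}-{\bf q}\rangle$. Then for every ${\bf z}\ge0$ with ${\bf A}{\bf z}={\bf b}$, $$\partial_t D_F({\bf z},\tilde{\bf x}(t))=-2L\,\|{\bf x}(t)\|_2^2\,\mathcal L({\bf x}(t)).$$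
   Context: $\odot$ denotes entrywise product/power, $\log$ acts entrywise, vector inequalities are entrywise, $\mathbf 1$ is the all-ones vector, $\mathbb R_+=[0,\infty)$. Loss: $\mathcal L({\bf x})=\frac{1}{2L}\|{\bf A}{\bf x}^{\odot L}-{\bf b}\|_2^2$. Weight-normalized loss $\tilde{\mathcal L}(r,{\bf u})=\mathcal L\big(\frac{r}{\|{\bf u}\|_2}{\bf u}\big)$. Weight-normalized gradient flow: $\partial_t r=-\eta_r\nabla_r\tilde{\mathcal L}(r,{\bf u})$, $\partial_t{\bf u}=-\eta_{\bf u}\nabla_{\bf u}\tilde{\mathcal L}(r,{\bf u})$, $r(0)=r_0$, ${\bf u}(0)={\bf u}_0$. *)

theory Defs
  imports "HOL-Analysis.Analysis"
begin

definition epow :: "real^'n \<Rightarrow> nat \<Rightarrow> real^'n" where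
  "epow x L = (\<chi> i. (x $ i) ^ L)"

definition lossL :: "nat \<Rightarrow> real^'n^'m \<Rightarrow> real^'m \<Rightarrow> real^'n \<Rightarrow> real" where
  "lossL L A b x = (1 / (2 * real L)) * (norm (A *v epow x L - b))\<^sup>2"

definition lossWN :: "nat \<Rightarrow> real^'n^'m \<Rightarrow> real^'m \<Rightarrow> real \<Rightarrow> real^'n \<Rightarrow> real" where
  "lossWN L A b r u = lossL L A b ((r / norm u) *\<^sub>R u)"

definition Fpot :: "nat \<Rightarrow> real^'n \<Rightarrow> real" where
  "Fpot L p = (if L = 2
     then (1/2) * (\<Sum>i\<in>UNIV. (if p $ i = 0 then 0 else p $ i * ln (p $ i)) - p $ i)
     else (real L / (2 * (2 - real L))) * (\<Sum>i\<in>UNIV. (p $ i) powr (2 / real L)))"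

definition bregman :: "nat \<Rightarrow> real^'n \<Rightarrow> real^'n \<Rightarrow> real" where
  "bregman L p q = Fpot L p - Fpot L q - inner (THE g. GDERIV (Fpot L) q :> g) (p - q)"

end

theory Submission
  imports Defs
begin

lemma vec_has_derivative:
  fixes f :: "'a::real_normed_vector \<Rightarrow> real^'n"
  assumes "\<And>i. ((\<lambda>x. f x $ i) has_derivative (\<lambda>h. f' h $ i)) (at a within S)"
  shows "(f has_derivative f') (at a within S)"
proof (rule has_derivative_componentwise_within[THEN iffD2], intro ballI)
  fix v :: "real^'n" assume "v \<in> Basis"
  then obtain j where v: "v = axis j 1" by (auto simp: Basis_vec_def)
  have "(\<lambda>x. f x \<bullet> v) = (\<lambda>x. f x $ j)" "(\<lambda>x. f' x \<bullet> v) = (\<lambda>x. f' x $ j)"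
    unfolding v by (simp_all add: inner_axis)
  then show "((\<lambda>x. f x \<bullet> v) has_derivative (\<lambda>x. f' x \<bullet> v)) (at a within S)"
    using assms[of j] by simp
qed

lemma epow_deriv:
  "((\<lambda>x. epow x L) has_derivative (\<lambda>h. \<chi> i. real L * x$i^(L-1) * h$i)) (at x within S)"
proof (rule vec_has_derivative)
  fix i
  have "((\<lambda>x. x $ i ^ L) has_derivative (\<lambda>h. of_nat L * x$i^(L-1) * h$i)) (at x within S)"
    using has_derivative_power[OF bounded_linear.has_derivative[OF bounded_linear_vec_nth has_derivative_ident], of i L x S]
    by (simp add: ac_simps)
  then show "((\<lambda>x. epow x L $ i) has_derivative (\<lambda>h. (\<chi> i. real L * x$i^(L-1) * h$i) $ i)) (at x within S)"
    by (simp add: epow_def)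
qed

definition wv :: "nat \<Rightarrow> real^'n^'m \<Rightarrow> real^'m \<Rightarrow> real^'n \<Rightarrow> real^'n" where
  "wv L A b x = transpose A *v (A *v epow x L - b)"

definition Gr :: "nat \<Rightarrow> real^'n^'m \<Rightarrow> real^'m \<Rightarrow> real^'n \<Rightarrow> real^'n" where
  "Gr L A b x = (\<chi> i. x$i^(L-1) * wv L A b x $ i)"

lemma inner_wv: "inner (wv L A b x) k = inner (A *v epow x L - b) (A *v k)"
proof -
  have "transpose A *v (A *v epow x L - b) = (A *v epow x L - b) v* A"
    using vector_transpose_matrix[of "A *v epow x L - b" "transpose A"] unfolding transpose_transpose by (rule sym)
  then show ?thesis unfolding wv_def by (simp only: dot_lmul_matrix)
qed

lemma half2: "l \<noteq> 0 \<Longrightarrow> (1 / (2 * l)) * (p + p) = (1 / l) * (p::real)"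
  by (simp add: field_simps)

lemma lossL_deriv:
  assumes "L > 0"
  shows "(lossL L A b has_derivative (\<lambda>h. inner h (Gr L A b x))) (at x within S)"
proof -
  let ?y = "\<lambda>x. A *v epow x L - b"
  let ?dE = "\<lambda>h. \<chi> i. real L * x$i^(L-1) * h$i"
  have dAy: "((\<lambda>x. A *v epow x L) has_derivative (\<lambda>h. A *v ?dE h)) (at x within S)"
    by (rule bounded_linear.has_derivative[OF matrix_vector_mul_bounded_linear epow_deriv])
  have dy: "(?y has_derivative (\<lambda>h. A *v ?dE h)) (at x within S)"
    using has_derivative_diff[OF dAy has_derivative_const[where c=b]] by simp
  have "((\<lambda>x. inner (?y x) (?y x)) has_derivative
      (\<lambda>h. inner (?y x) (A *v ?dE h) + inner (A *v ?dE h) (?y x))) (at x within S)"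
    by (rule has_derivative_inner[OF dy dy])
  from has_derivative_mult[OF has_derivative_const[where c="1 / (2 * real L)"] this]
  have d3: "((\<lambda>x. (1 / (2 * real L)) * inner (?y x) (?y x)) has_derivative
      (\<lambda>h. (1 / (2 * real L)) * (inner (?y x) (A *v ?dE h) + inner (A *v ?dE h) (?y x)))) (at x within S)"
    by simp
  have e3: "(\<lambda>h. (1 / (2 * real L)) * (inner (?y x) (A *v ?dE h) + inner (A *v ?dE h) (?y x)))
       = (\<lambda>h. inner h (Gr L A b x))"
  proof
    fix h
    have "(1 / (2 * real L)) * (inner (?y x) (A *v ?dE h) + inner (A *v ?dE h) (?y x))
        = (1 / real L) * inner (wv L A b x) (?dE h)"
    proof -
      have c1: "inner (A *v ?dE h) (?y x) = inner (?y x) (A *v ?dE h)" by (rule inner_commute)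
      have c2: "inner (wv L A b x) (?dE h) = inner (?y x) (A *v ?dE h)" by (rule inner_wv)
      have Lnz: "real L \<noteq> 0" using assms by simp
      show ?thesis unfolding c1 c2 by (rule half2[OF Lnz])
    qed
    also have "\<dots> = inner h (Gr L A b x)"
      unfolding inner_vec_def sum_distrib_left
      by (intro sum.cong refl) (use assms in \<open>simp add: Gr_def inner_real_def field_simps\<close>)
    finally show "(1 / (2 * real L)) * (inner (?y x) (A *v ?dE h) + inner (A *v ?dE h) (?y x))
       = inner h (Gr L A b x)" .
  qed
  have e4: "lossL L A b = (\<lambda>x. (1 / (2 * real L)) * inner (?y x) (?y x))"
    by (rule ext) (simp add: lossL_def power2_norm_eq_inner)
  show ?thesis unfolding e4 e3[symmetric] by (rule d3)
qed

lemma homog_grad: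
  fixes f :: "'a::real_inner \<Rightarrow> real"
  assumes g: "GDERIV f v :> g" and h: "\<And>c. c > 0 \<Longrightarrow> f (c *\<^sub>R v) = f v"
  shows "inner v g = 0"
proof -
  have d1: "((\<lambda>c. f (c *\<^sub>R v)) has_derivative (\<lambda>k. inner (k *\<^sub>R v) g)) (at 1)"
  proof -
    have dl: "((\<lambda>c. c *\<^sub>R v) has_derivative (\<lambda>k. k *\<^sub>R v)) (at 1)"
      by (rule bounded_linear.has_derivative[OF bounded_linear_scaleR_left has_derivative_ident])
    have df: "(f has_derivative (\<lambda>h. inner h g)) (at ((\<lambda>c. c *\<^sub>R v) 1))"
      using g by (simp add: gderiv_def)
    show ?thesis by (rule has_derivative_compose[OF dl df])
  qed
  have d2: "((\<lambda>c. f (c *\<^sub>R v)) has_derivative (\<lambda>k. 0)) (at 1)"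
  proof (rule has_derivative_transform_within_open[where s="{0<..}"])
    show "((\<lambda>c. f v) has_derivative (\<lambda>k. 0)) (at 1)" by (rule has_derivative_const)
  qed (auto simp: h)
  have "(\<lambda>k. inner (k *\<^sub>R v) g) = (\<lambda>k::real. 0)" using has_derivative_unique[OF d1 d2] .
  then have "inner ((1::real) *\<^sub>R v) g = 0" by metis
  then show ?thesis by simp
qed

lemma gderiv_unique:
  fixes f :: "'a::real_inner \<Rightarrow> real"
  assumes "GDERIV f x :> g" "GDERIV f x :> g'" shows "g = g'"
proof -
  have "(\<lambda>h. inner h g) = (\<lambda>h. inner h g')"
    using has_derivative_unique assms by (metis gderiv_def)
  then have "inner (g - g') g = inner (g - g') g'" by metis
  then have "inner (g - g') (g - g') = 0" by (simp add: inner_diff_right)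
  then show ?thesis by simp
qed

lemma lossWN_r:
  assumes "norm v = 1" "L > 0"
  shows "GDERIV (\<lambda>s. lossWN L A b s v) s :> inner v (Gr L A b (s *\<^sub>R v))"
proof -
  have e: "(\<lambda>s. lossWN L A b s v) = (\<lambda>s. lossL L A b (s *\<^sub>R v))"
    using assms by (simp add: lossWN_def)
  have d1: "((\<lambda>s. s *\<^sub>R v) has_derivative (\<lambda>k. k *\<^sub>R v)) (at s)"
    by (intro derivative_eq_intros) auto
  have "((\<lambda>s. lossL L A b (s *\<^sub>R v)) has_derivative (\<lambda>k. inner (k *\<^sub>R v) (Gr L A b (s *\<^sub>R v)))) (at s)"
    using has_derivative_compose[OF d1 lossL_deriv[OF assms(2)]] by simp
  then show ?thesis unfolding e gderiv_def by (simp add: ac_simps)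
qed

lemma lossWN_u:
  assumes "norm v = 1" "L > 0"
  shows "GDERIV (\<lambda>w. lossWN L A b s w) v :>
     s *\<^sub>R (Gr L A b (s *\<^sub>R v) - inner v (Gr L A b (s *\<^sub>R v)) *\<^sub>R v)"
proof -
  have v0: "v \<noteq> 0" using assms by auto
  have dn: "(norm has_derivative (\<lambda>h. inner h v)) (at v)"
    using GDERIV_norm[OF v0] assms by (simp add: gderiv_def sgn_div_norm)
  have dinv: "((\<lambda>w. s / norm w) has_derivative (\<lambda>h. - s * inner h v)) (at v)"
  proof -
    have "((\<lambda>y. s / y) has_real_derivative (- s / (norm v)^2)) (at (norm v))"
      using v0 by (auto intro!: derivative_eq_intros simp: power2_eq_square)
    then have "((\<lambda>y. s / y) has_derivative (*) (- s)) (at (norm v))"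
      using assms by (simp add: has_field_derivative_def)
    from has_derivative_compose[OF dn this] show ?thesis by simp
  qed
  have dphi: "((\<lambda>w. (s / norm w) *\<^sub>R w) has_derivative
      (\<lambda>h. s *\<^sub>R h + (- s * inner h v) *\<^sub>R v)) (at v)"
    using has_derivative_scaleR[OF dinv has_derivative_ident] assms by simp
  have "((\<lambda>w. lossL L A b ((s / norm w) *\<^sub>R w)) has_derivative
      (\<lambda>h. inner (s *\<^sub>R h + (- s * inner h v) *\<^sub>R v) (Gr L A b (s *\<^sub>R v)))) (at v)"
    using has_derivative_compose[OF dphi lossL_deriv[OF assms(2)]] assms by simp
  moreover have "(\<lambda>h. inner (s *\<^sub>R h + (- s * inner h v) *\<^sub>R v) (Gr L A b (s *\<^sub>R v)))
     = (\<lambda>h. inner h (s *\<^sub>R (Gr L A b (s *\<^sub>R v) - inner v (Gr L A b (s *\<^sub>R v)) *\<^sub>R v)))"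
    by (auto simp: inner_add_left inner_diff_right inner_commute algebra_simps)
  ultimately show ?thesis unfolding gderiv_def lossWN_def by simp
qed

lemma pos_ode:
  fixes f k :: "real \<Rightarrow> real"
  assumes d: "\<And>t. t \<ge> 0 \<Longrightarrow> (f has_real_derivative f t * k t) (at t within {0..})"
    and k: "continuous_on {0..} k" and f0: "f 0 > 0" and T: "T \<ge> 0"
  shows "f T > 0"
proof -
  define K where "K x = integral {0..x} k" for x
  define h where "h x = f x * exp (- K x)" for x
  have kT: "continuous_on {0..T} k" using k by (rule continuous_on_subset) auto
  have "\<exists>c. \<forall>x\<in>{0..T}. h x = c"
  proof (rule has_field_derivative_zero_constant)
    fix x assume x: "x \<in> {0..T}"
    have dK: "(K has_real_derivative k x) (at x within {0..T})"
      unfolding K_def by (rule integral_has_real_derivative[OF kT x])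
    have df: "(f has_real_derivative f x * k x) (at x within {0..T})"
      using d[of x] x by (auto intro: DERIV_subset)
    have dE: "((\<lambda>x. exp (- K x)) has_real_derivative exp (- K x) * (- k x)) (at x within {0..T})"
      using dK by (auto intro!: derivative_eq_intros)
    have "(h has_real_derivative f x * k x * exp (- K x) + exp (- K x) * (- k x) * f x) (at x within {0..T})"
      unfolding h_def by (rule DERIV_mult[OF df dE])
    then show "(h has_real_derivative 0) (at x within {0..T})" by (simp add: algebra_simps)
  qed simp
  then obtain c where c: "\<forall>x\<in>{0..T}. h x = c" by blast
  have "h T = h 0" using c T by auto
  also have "h 0 = f 0" by (simp add: h_def K_def)
  finally have "f T * exp (- K T) > 0" using f0 by (simp add: h_def)
  then show ?thesis by (simp add: zero_less_mult_iff)
qed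

lemma comp_deriv:
  fixes q :: "real^'n"
  assumes "(\<phi> has_real_derivative d) (at (q$i))"
  shows "((\<lambda>p. \<phi> (p$i)) has_derivative (\<lambda>h. d * h$i)) (at q)"
proof -
  have "((\<lambda>p. p$i) has_derivative (\<lambda>h. h$i)) (at q)"
    by (rule bounded_linear.has_derivative[OF bounded_linear_vec_nth has_derivative_ident])
  from has_derivative_compose[OF this assms[unfolded has_field_derivative_def]] show ?thesis by simp
qed

definition gF :: "nat \<Rightarrow> real^'n \<Rightarrow> real^'n" where
  "gF L q = (\<chi> i. if L = 2 then ln (q$i) / 2 else (1 / (2 - real L)) * q$i powr (2 / real L - 1))"

definition Fs :: "nat \<Rightarrow> real^'n \<Rightarrow> real" where
  "Fs L p = (if L = 2
     then (1/2) * (\<Sum>i\<in>UNIV. p $ i * ln (p $ i) - p $ i)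
     else (real L / (2 * (2 - real L))) * (\<Sum>i\<in>UNIV. (p $ i) powr (2 / real L)))"

lemma open_pos: "open {p::real^'n. \<forall>i. 0 < p$i}"
proof -
  have "{p::real^'n. \<forall>i. 0 < p$i} = (\<Inter>i\<in>UNIV. {p. p$i > 0})" by auto
  then show ?thesis by (auto intro!: open_INT open_halfspace_component_gt_cart)
qed

lemma Fpot_grad:
  fixes q :: "real^'n"
  assumes q: "\<forall>i. q$i > 0" and L: "L \<ge> 2"
  shows "GDERIV (Fpot L) q :> gF L q"
proof -
  have "(Fs L has_derivative (\<lambda>h. inner h (gF L q))) (at q)"
  proof (cases "L = 2")
    case True
    have di: "\<And>i. ((\<lambda>p. p $ i * ln (p $ i) - p $ i) has_derivative (\<lambda>h. ln (q$i) * h$i)) (at q)"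
    proof -
      fix i
      have "((\<lambda>y. y * ln y - y) has_real_derivative ln (q$i)) (at (q$i))"
        using q[rule_format, of i] by (auto intro!: derivative_eq_intros)
      then show "?thesis i" by (rule comp_deriv)
    qed
    have "((\<lambda>p. \<Sum>i\<in>UNIV. p $ i * ln (p $ i) - p $ i) has_derivative
        (\<lambda>h. \<Sum>i\<in>UNIV. ln (q$i) * h$i)) (at q)"
      by (rule has_derivative_sum) (rule di)
    from has_derivative_mult[OF has_derivative_const[where c="1/2"] this]
    have "((\<lambda>p. (1/2) * (\<Sum>i\<in>UNIV. p $ i * ln (p $ i) - p $ i)) has_derivative
        (\<lambda>h. (1/2) * (\<Sum>i\<in>UNIV. ln (q$i) * h$i))) (at q)"
      by simp
    moreover have "(\<lambda>h. (1/2) * (\<Sum>i\<in>UNIV. ln (q$i) * h$i)) = (\<lambda>h. inner h (gF L q))"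
      using True by (auto simp: inner_vec_def gF_def sum_distrib_left ac_simps)
    ultimately show ?thesis using True unfolding Fs_def by simp
  next
    case False
    let ?c = "real L / (2 * (2 - real L))"
    have di: "\<And>i. ((\<lambda>p. p $ i powr (2 / real L)) has_derivative
            (\<lambda>h. ((2 / real L) * q$i powr (2 / real L - 1)) * h$i)) (at q)"
    proof -
      fix i
      have "((\<lambda>y. y powr (2 / real L)) has_real_derivative (2 / real L) * q$i powr (2 / real L - 1)) (at (q$i))"
        using q[rule_format, of i] by (auto intro!: derivative_eq_intros)
      then show "?thesis i" by (rule comp_deriv)
    qed
    have "((\<lambda>p. \<Sum>i\<in>UNIV. p $ i powr (2 / real L)) has_derivative
        (\<lambda>h. \<Sum>i\<in>UNIV. ((2 / real L) * q$i powr (2 / real L - 1)) * h$i)) (at q)"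
      by (rule has_derivative_sum) (rule di)
    from has_derivative_mult[OF has_derivative_const[where c="?c"] this]
    have "((\<lambda>p. ?c * (\<Sum>i\<in>UNIV. p $ i powr (2 / real L))) has_derivative
        (\<lambda>h. ?c * (\<Sum>i\<in>UNIV. ((2 / real L) * q$i powr (2 / real L - 1)) * h$i))) (at q)"
      by simp
    moreover have "(\<lambda>h. ?c * (\<Sum>i\<in>UNIV. ((2 / real L) * q$i powr (2 / real L - 1)) * h$i))
        = (\<lambda>h. inner h (gF L q))"
    proof
      fix h
      have nz: "2 - real L \<noteq> 0" "real L \<noteq> 0" using False L by auto
      have cc: "?c * (2 / real L) = 1 / (2 - real L)" using nz by (simp add: field_simps)
      have gi: "\<And>i. gF L q $ i = 1 / (2 - real L) * q$i powr (2 / real L - 1)"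
        by (simp add: gF_def False)
      show "?c * (\<Sum>i\<in>UNIV. ((2 / real L) * q$i powr (2 / real L - 1)) * h$i) = inner h (gF L q)"
        unfolding inner_vec_def sum_distrib_left
        by (intro sum.cong refl) (simp only: gi cc[symmetric] inner_real_def ac_simps)
    qed
    ultimately show ?thesis using False unfolding Fs_def by simp
  qed
  moreover have "Fs L p = Fpot L p" if "p \<in> {p. \<forall>i. 0 < p$i}" for p :: "real^'n"
  proof -
    have pos: "\<forall>i. 0 < p$i" using that by simp
    have "p$i \<noteq> 0" for i using pos[rule_format, of i] by linarith
    then show ?thesis by (simp add: Fs_def Fpot_def)
  qed
  ultimately have "(Fpot L has_derivative (\<lambda>h. inner h (gF L q))) (at q)"
    using has_derivative_transform_within_open[OF _ open_pos] q by blast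
  then show ?thesis by (simp add: gderiv_def)
qed

definition phi :: "nat \<Rightarrow> real \<Rightarrow> real" where
  "phi L y = (if L = 2 then ln y else y powr (2 - real L) / (2 - real L))"

lemma phi_deriv:
  assumes "y > 0" "L \<ge> 2"
  shows "(phi L has_real_derivative 1 / y^(L-1)) (at y)"
proof (cases "L = 2")
  case True
  then show ?thesis using assms unfolding phi_def
    by (auto intro!: derivative_eq_intros)
next
  case False
  have "((\<lambda>y. y powr (2 - real L) / (2 - real L)) has_real_derivative
      ((2 - real L) * y powr (2 - real L - 1)) / (2 - real L)) (at y)"
    using assms by (auto intro!: derivative_eq_intros)
  moreover have "((2 - real L) * y powr (2 - real L - 1)) / (2 - real L) = 1 / y^(L-1)"
  proof -
    have nz: "2 - real L \<noteq> 0" using False assms by auto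
    have e1: "2 - real L - 1 = - real (L - 1)" using assms by (simp add: of_nat_diff)
    have e2: "y powr (2 - real L - 1) = 1 / y^(L-1)"
      unfolding e1 by (subst powr_minus, subst powr_realpow[OF assms(1)]) (simp add: divide_inverse)
    show ?thesis unfolding e2 using nz by simp
  qed
  ultimately show ?thesis using False unfolding phi_def by simp
qed

lemma rl1: "- c * X - d * a * (z - p) = - c * X - d * (a * z) + d * (a * p)" for c X d a z p :: real
  by (simp add: algebra_simps)

lemma rl2: "- c * X - d * (a * z) + d * X = (- c + d) * X - z * (a * d)" for c X d a z :: real
  by (simp add: algebra_simps)

lemma kk: fixes a :: real assumes "a \<noteq> 2" shows "- (a / (2 * (2 - a))) + 1 / (2 - a) = 1/2"
proof -
  have sq: "(a-2)*(a-2) > 0" using assms by (auto simp: zero_less_mult_iff)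
  have nz: "2 - a \<noteq> 0" "4 - 2 * a \<noteq> 0" "4 - a * 2 \<noteq> 0" "8 + a * (a * 2) \<noteq> a * 8"
    using assms sq by (auto simp: algebra_simps)
  show ?thesis using nz by (simp add: field_simps)
qed

lemma epow_nth[simp]: "epow x L $ i = x$i ^ L" by (simp add: epow_def)

lemma bregman_eq:
  assumes x: "\<forall>i. x$i > 0" and L: "L \<ge> 2"
  shows "bregman L z (epow x L) = Fpot L z + (\<Sum>i\<in>UNIV. (x$i)^2 / 2 - z$i * phi L (x$i))"
proof -
  have q: "\<forall>i. epow x L $ i > 0" using x by (simp add: epow_def)
  have th: "(THE g. GDERIV (Fpot L) (epow x L) :> g) = gF L (epow x L)"
    using Fpot_grad[OF q L] gderiv_unique by blast
  show ?thesis
  proof (cases "L = 2")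
    case True
    have lnsq: "\<And>i. ln (x$i ^ 2) = 2 * ln (x$i)" using x by (simp add: ln_realpow)
    have nz: "\<And>i. x$i ^ 2 \<noteq> 0" using x by (simp add: less_imp_neq[symmetric])
    have "bregman L z (epow x L) = Fpot L z + (\<Sum>i\<in>UNIV. - (1/2) * ((x$i)^2 * (2 * ln (x$i)) - (x$i)^2)
         - ln (x$i) * (z$i - (x$i)^2))"
      using True unfolding bregman_def th
      using x by (simp add: Fpot_def gF_def inner_vec_def lnsq nz less_imp_neq[symmetric] sum_distrib_left sum_subtractf[symmetric]
          sum.distrib[symmetric] algebra_simps)
    also have "\<dots> = Fpot L z + (\<Sum>i\<in>UNIV. (x$i)^2 / 2 - z$i * phi L (x$i))"
      using True by (intro arg_cong[where f="\<lambda>s. Fpot L z + s"] sum.cong refl) (simp add: phi_def algebra_simps)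
    finally show ?thesis .
  next
    case False
    have nz: "2 - real L \<noteq> 0" using False L by auto
    have e1: "\<And>i. (x$i ^ L) powr (2 / real L) = (x$i)^2"
      using x L by (simp add: powr_realpow[symmetric] powr_powr)
    have ex: "real L * (2 / real L - 1) = 2 - real L" using L by (simp add: field_simps)
    have e2: "(x$i ^ L) powr (2 / real L - 1) = x$i powr (2 - real L)" for i
    proof -
      have "(x$i ^ L) powr (2 / real L - 1) = (x$i powr real L) powr (2 / real L - 1)"
        using x by (simp add: powr_realpow)
      also have "\<dots> = x$i powr (real L * (2 / real L - 1))" by (rule powr_powr)
      also have "\<dots> = x$i powr (2 - real L)" by (simp only: ex)
      finally show ?thesis .
    qed
    have e3: "\<And>i. x$i powr (2 - real L) * x$i ^ L = (x$i)^2"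
      using x L by (simp add: powr_realpow[symmetric] powr_add[symmetric])
    have "bregman L z (epow x L) = Fpot L z + (\<Sum>i\<in>UNIV.
        - (real L / (2 * (2 - real L))) * (x$i)^2 - (1 / (2 - real L)) * x$i powr (2 - real L) * (z$i - x$i^L))"
    proof -
      let ?c = "real L / (2 * (2 - real L))"
      have f1: "Fpot L (epow x L) = ?c * (\<Sum>i\<in>UNIV. (x$i)^2)"
        using False by (simp add: Fpot_def e1)
      have f2: "inner (gF L (epow x L)) (z - epow x L) =
          (\<Sum>i\<in>UNIV. (1 / (2 - real L)) * x$i powr (2 - real L) * (z$i - x$i^L))"
        using False by (simp add: inner_vec_def gF_def e2)
      have f3: "(\<Sum>i\<in>UNIV. - ?c * (x$i)^2 - (1 / (2 - real L)) * x$i powr (2 - real L) * (z$i - x$i^L))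
          = - (?c * (\<Sum>i\<in>UNIV. (x$i)^2)) - (\<Sum>i\<in>UNIV. (1 / (2 - real L)) * x$i powr (2 - real L) * (z$i - x$i^L))"
        by (simp add: sum_subtractf sum_negf sum_distrib_left)
      show ?thesis unfolding bregman_def th f1 f2 f3 by simp
    qed
    also have "\<dots> = Fpot L z + (\<Sum>i\<in>UNIV. (x$i)^2 / 2 - z$i * phi L (x$i))"
    proof (intro arg_cong[where f="\<lambda>s. Fpot L z + s"] sum.cong refl)
      fix i
      show "- (real L / (2 * (2 - real L))) * (x$i)^2 - (1 / (2 - real L)) * x$i powr (2 - real L) * (z$i - x$i^L)
          = (x$i)^2 / 2 - z$i * phi L (x$i)"
      proof -
        let ?X = "(x$i)^2" and ?a = "x$i powr (2 - real L)" and ?c = "real L / (2 * (2 - real L))"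
        have k: "- ?c + 1 / (2 - real L) = 1/2" by (rule kk) (use False in simp)
        have "- ?c * ?X - (1 / (2 - real L)) * ?a * (z$i - x$i^L)
            = - ?c * ?X - (1 / (2 - real L)) * (?a * z$i) + (1 / (2 - real L)) * (x$i powr (2 - real L) * x$i ^ L)"
          by (rule rl1)
        also have "\<dots> = - ?c * ?X - (1 / (2 - real L)) * (?a * z$i) + (1 / (2 - real L)) * ?X"
          by (simp only: e3)
        also have "\<dots> = (- ?c + 1 / (2 - real L)) * ?X - z$i * (?a * (1 / (2 - real L)))"
          by (rule rl2)
        also have "\<dots> = ?X / 2 - z$i * phi L (x$i)"
          by (simp only: k phi_def if_not_P[OF False]) simp
        finally show ?thesis .
      qed
    qed
    finally show ?thesis .
  qed
qed

lemma aux_val: "P \<noteq> 0 \<Longrightarrow> x * (c * P * w) - z * (1 / P * (c * P * w)) = c * ((x * P - z) * w)"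
  for P x c w z :: real
  by (simp add: field_simps)

lemma wv_cont: "continuous_on UNIV (wv L A b)"
proof -
  have ec: "continuous_on UNIV (\<lambda>x. epow x L)"
    by (rule has_derivative_continuous_on) (rule epow_deriv)
  have "continuous_on UNIV (\<lambda>x. A *v epow x L)"
    by (rule continuous_on_compose2[OF linear_continuous_on[OF matrix_vector_mul_bounded_linear] ec]) auto
  then have "continuous_on UNIV (\<lambda>x. A *v epow x L - b)" by (rule continuous_on_diff[OF _ continuous_on_const])
  then show ?thesis unfolding wv_def[abs_def]
    by (rule continuous_on_compose2[OF linear_continuous_on[OF matrix_vector_mul_bounded_linear]]) auto
qed

theorem mainTheorem17:
  fixes L :: nat and A :: "real^'n^'m" and b :: "real^'m"
    and r :: "real \<Rightarrow> real" and u :: "real \<Rightarrow> real^'n"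
  assumes hL: "L \<ge> 2"
    and r_flow: "\<forall>t\<ge>0. \<exists>g. GDERIV (\<lambda>s. lossWN L A b s (u t)) (r t) :> g \<and>
                   (r has_real_derivative (- ((r t)\<^sup>2 * g))) (at t within {0..})"
    and u_flow: "\<forall>t\<ge>0. \<exists>g. GDERIV (\<lambda>v. lossWN L A b (r t) v) (u t) :> g \<and>
                   (u has_vector_derivative (- g)) (at t within {0..})"
    and r0: "r 0 > 0"
    and u0: "\<forall>i. u 0 $ i > 0"
    and u0n: "norm (u 0) = 1"
    and z_nonneg: "\<forall>i. z $ i \<ge> 0"
    and z_sol: "A *v z = b"
  shows "\<forall>t>0. ((\<lambda>s. bregman L z (epow ((r s / norm (u s)) *\<^sub>R u s) L))
            has_real_derivative
              (- 2 * real L * (norm ((r t / norm (u t)) *\<^sub>R u t))\<^sup>2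
                 * lossL L A b ((r t / norm (u t)) *\<^sub>R u t))) (at t)"
proof (intro allI impI)
  fix t :: real assume t: "t > 0"
  have L0: "L > 0" using hL by simp
  have dnorm: "((\<lambda>s. inner (u s) (u s)) has_real_derivative 0) (at s within {0..})"
    if s: "s \<in> {0..}" for s
  proof -
    from u_flow s obtain g where g: "GDERIV (\<lambda>v. lossWN L A b (r s) v) (u s) :> g"
      and ud: "(u has_vector_derivative - g) (at s within {0..})" by auto
    have hom: "inner (u s) g = 0"
    proof (rule homog_grad[OF g])
      fix c :: real assume c: "c > 0"
      have "r s / norm (c *\<^sub>R u s) * c = r s / norm (u s)"
        using c by (cases "u s = 0") (auto simp: field_simps)
      then show "lossWN L A b (r s) (c *\<^sub>R u s) = lossWN L A b (r s) (u s)"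
        by (simp add: lossWN_def scaleR_scaleR del: norm_scaleR)
    qed
    from ud have du: "(u has_derivative (\<lambda>h. h *\<^sub>R - g)) (at s within {0..})"
      by (simp add: has_vector_derivative_def)
    have "((\<lambda>s. inner (u s) (u s)) has_derivative
        (\<lambda>h. inner (u s) (h *\<^sub>R - g) + inner (h *\<^sub>R - g) (u s))) (at s within {0..})"
      by (rule has_derivative_inner[OF du du])
    moreover have "(\<lambda>h. inner (u s) (h *\<^sub>R - g) + inner (h *\<^sub>R - g) (u s)) = (*) 0"
      using hom by (auto simp: inner_commute)
    ultimately show ?thesis by (simp add: has_field_derivative_def)
  qed
  have "\<exists>c. \<forall>s\<in>{0::real..}. inner (u s) (u s) = c"
    by (rule has_field_derivative_zero_constant) (auto intro: dnorm)
  then obtain c where c: "\<forall>s\<in>{0::real..}. inner (u s) (u s) = c" by blast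
  have nu: "norm (u s) = 1" if "s \<ge> 0" for s
  proof -
    have "inner (u s) (u s) = inner (u 0) (u 0)" using c that by simp
    also have "\<dots> = (norm (u 0))^2" by (simp add: power2_norm_eq_inner)
    also have "\<dots> = 1" using u0n by simp
    finally have "(norm (u s))^2 = 1" by (simp add: power2_norm_eq_inner)
    then show ?thesis using norm_ge_zero[of "u s"] by (auto simp: power2_eq_1_iff)
  qed
  define X where "X s = r s *\<^sub>R u s" for s
  have Xeq: "(r s / norm (u s)) *\<^sub>R u s = X s" if "s \<ge> 0" for s
    using nu[OF that] by (simp add: X_def)
  define G where "G s = Gr L A b (X s)" for s
  have XD: "(X has_vector_derivative (- ((r s)^2)) *\<^sub>R G s) (at s within {0..})" if s: "s \<ge> 0" for s
  proof -
    from r_flow s obtain g1 where g1: "GDERIV (\<lambda>\<sigma>. lossWN L A b \<sigma> (u s)) (r s) :> g1"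
      and rd: "(r has_real_derivative - ((r s)^2 * g1)) (at s within {0..})" by auto
    from u_flow s obtain g2 where g2: "GDERIV (\<lambda>v. lossWN L A b (r s) v) (u s) :> g2"
      and ud: "(u has_vector_derivative - g2) (at s within {0..})" by auto
    have e1: "g1 = inner (u s) (G s)"
      using gderiv_unique[OF g1 lossWN_r[OF nu[OF s] L0]] by (simp add: G_def X_def)
    have e2: "g2 = r s *\<^sub>R (G s - inner (u s) (G s) *\<^sub>R u s)"
      using gderiv_unique[OF g2 lossWN_u[OF nu[OF s] L0]] by (simp add: G_def X_def)
    have "(X has_vector_derivative (r s *\<^sub>R (- g2) + (- ((r s)^2 * g1)) *\<^sub>R u s)) (at s within {0..})"
      unfolding X_def[abs_def] by (rule has_vector_derivative_scaleR[OF rd ud])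
    moreover have "r s *\<^sub>R (- g2) + (- ((r s)^2 * g1)) *\<^sub>R u s = (- ((r s)^2)) *\<^sub>R G s"
      unfolding e1 e2 by (simp add: algebra_simps power2_eq_square)
    ultimately show ?thesis by simp
  qed
  have XiD: "((\<lambda>s. X s $ i) has_real_derivative (- ((r s)^2) * (X s $ i)^(L-1) * wv L A b (X s) $ i))
      (at s within {0..})" if "s \<ge> 0" for s i
  proof -
    have "(X has_derivative (\<lambda>h. h *\<^sub>R ((- ((r s)^2)) *\<^sub>R G s))) (at s within {0..})"
      using XD[OF that] by (simp add: has_vector_derivative_def)
    from bounded_linear.has_derivative[OF bounded_linear_vec_nth[of i] this]
    have "((\<lambda>s. X s $ i) has_derivative (\<lambda>h. (h *\<^sub>R ((- ((r s)^2)) *\<^sub>R G s)) $ i)) (at s within {0..})" .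
    moreover have "(\<lambda>h. (h *\<^sub>R ((- ((r s)^2)) *\<^sub>R G s)) $ i) = (*) (- ((r s)^2) * (X s $ i)^(L-1) * wv L A b (X s) $ i)"
      by (auto simp: G_def Gr_def)
    ultimately show ?thesis by (simp add: has_field_derivative_def)
  qed
  have rc: "continuous_on {0..} r"
    using r_flow by (auto simp: continuous_on_eq_continuous_within intro: DERIV_continuous)
  have uc: "continuous_on {0..} u"
    using u_flow by (auto simp: continuous_on_eq_continuous_within intro: has_vector_derivative_continuous)
  have Xc: "continuous_on {0..} X" unfolding X_def[abs_def] using rc uc by (intro continuous_intros)
  have wXc: "continuous_on {0..} (\<lambda>s. wv L A b (X s))"
    by (rule continuous_on_compose2[OF wv_cont Xc]) auto
  have pw: "y^(L-1) = y * y^(L-2)" for y :: real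
  proof -
    have "L - 1 = Suc (L - 2)" using hL by arith
    then show ?thesis by simp
  qed
  have Xpos: "X s $ i > 0" if "s \<ge> 0" for s i
  proof -
    define kf where "kf \<tau> = - ((r \<tau>)^2) * (X \<tau> $ i)^(L-2) * wv L A b (X \<tau>) $ i" for \<tau>
    have dd: "((\<lambda>\<tau>. X \<tau> $ i) has_real_derivative X \<tau> $ i * kf \<tau>) (at \<tau> within {0..})"
      if "\<tau> \<ge> 0" for \<tau>
    proof -
      have eq: "(- ((r \<tau>)^2) * (X \<tau> $ i)^(L-1) * wv L A b (X \<tau>) $ i) = X \<tau> $ i * kf \<tau>"
        unfolding pw kf_def by (simp only: ac_simps)
      show ?thesis by (subst eq[symmetric]) (rule XiD[OF that])
    qed
    have c1: "continuous_on {0..} (\<lambda>s. X s $ i)"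
      by (rule continuous_on_compose2[OF linear_continuous_on[OF bounded_linear_vec_nth] Xc]) auto
    have c2: "continuous_on {0..} (\<lambda>s. wv L A b (X s) $ i)"
      by (rule continuous_on_compose2[OF linear_continuous_on[OF bounded_linear_vec_nth] wXc]) auto
    have kc: "continuous_on {0..} kf"
      unfolding kf_def[abs_def] using rc c1 c2 Xc wXc by (auto intro!: continuous_intros)
    have x0: "X 0 $ i > 0" using r0 u0 by (simp add: X_def)
    show ?thesis by (rule pos_ode[of "\<lambda>\<tau>. X \<tau> $ i" kf, OF dd kc x0 that])
  qed
  define E where "E s = Fpot L z + (\<Sum>i\<in>UNIV. (X s $ i)^2 / 2 - z$i * phi L (X s $ i))" for s
  define D where "D i = - ((r t)^2) * (X t $ i)^(L-1) * wv L A b (X t) $ i" for i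
  have Ed: "(E has_real_derivative (\<Sum>i\<in>UNIV. X t $ i * D i - z$i * (1 / (X t $ i)^(L-1) * D i)))
      (at t within {0..})"
  proof -
    have "((\<lambda>s. (X s $ i)^2 / 2 - z$i * phi L (X s $ i)) has_real_derivative
        X t $ i * D i - z$i * (1 / (X t $ i)^(L-1) * D i)) (at t within {0..})" for i
    proof -
      have d1: "((\<lambda>s. X s $ i) has_real_derivative D i) (at t within {0..})"
        unfolding D_def using XiD t by simp
      have d0: "((\<lambda>s. (X s $ i)^2 / 2) has_real_derivative X t $ i * D i) (at t within {0..})"
        using d1 by (auto intro!: derivative_eq_intros)
      have d2: "((\<lambda>s. phi L (X s $ i)) has_real_derivative 1 / (X t $ i)^(L-1) * D i) (at t within {0..})"
        by (rule DERIV_chain2[OF phi_deriv[OF Xpos hL] d1]) (use t in simp)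
      show ?thesis by (rule DERIV_diff[OF d0 DERIV_cmult[OF d2]])
    qed
    then have "((\<lambda>s. \<Sum>i\<in>UNIV. (X s $ i)^2 / 2 - z$i * phi L (X s $ i)) has_real_derivative
        (\<Sum>i\<in>UNIV. X t $ i * D i - z$i * (1 / (X t $ i)^(L-1) * D i))) (at t within {0..})"
      by (rule DERIV_sum)
    then show ?thesis unfolding E_def[abs_def] using DERIV_add[OF DERIV_const] by fastforce
  qed
  have Ed': "(E has_real_derivative (\<Sum>i\<in>UNIV. X t $ i * D i - z$i * (1 / (X t $ i)^(L-1) * D i))) (at t)"
    using Ed at_within_interior[of t "{0..}"] t by simp
  have val: "(\<Sum>i\<in>UNIV. X t $ i * D i - z$i * (1 / (X t $ i)^(L-1) * D i)) =
      - 2 * real L * (norm ((r t / norm (u t)) *\<^sub>R u t))\<^sup>2 * lossL L A b ((r t / norm (u t)) *\<^sub>R u t)"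
  proof -
    let ?w = "wv L A b (X t)" and ?y = "A *v epow (X t) L - b"
    have "(\<Sum>i\<in>UNIV. X t $ i * D i - z$i * (1 / (X t $ i)^(L-1) * D i))
        = (\<Sum>i\<in>UNIV. - ((r t)^2) * ((epow (X t) L - z) $ i * ?w $ i))"
    proof (rule sum.cong[OF refl])
      fix i
      have xn: "(X t $ i)^(L-1) \<noteq> 0" using Xpos[of t i] t by simp
      have xl: "X t $ i * (X t $ i)^(L-1) = (X t $ i)^L"
        using hL by (metis Suc_diff_le Suc_1 diff_Suc_1 le_trans one_le_numeral power_Suc)
      show "X t $ i * D i - z$i * (1 / (X t $ i)^(L-1) * D i) = - ((r t)^2) * ((epow (X t) L - z) $ i * ?w $ i)"
        unfolding D_def by (subst aux_val[OF xn], unfold xl) simp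
    qed
    also have "\<dots> = - ((r t)^2) * inner (epow (X t) L - z) ?w"
      by (simp add: inner_vec_def sum_distrib_left)
    also have "inner (epow (X t) L - z) ?w = inner ?y (A *v (epow (X t) L - z))"
      by (subst inner_commute) (rule inner_wv)
    also have "A *v (epow (X t) L - z) = ?y"
      by (simp add: matrix_vector_mult_diff_distrib z_sol)
    also have "inner ?y ?y = (norm ?y)^2" by (simp add: power2_norm_eq_inner)
    finally have "(\<Sum>i\<in>UNIV. X t $ i * D i - z$i * (1 / (X t $ i)^(L-1) * D i)) = - ((r t)^2) * (norm ?y)^2" .
    moreover have "(norm (X t))^2 = (r t)^2" using nu[of t] t by (simp add: X_def power_mult_distrib)
    ultimately show ?thesis using Xeq[of t] t L0 by (simp add: lossL_def)
  qed
  show "((\<lambda>s. bregman L z (epow ((r s / norm (u s)) *\<^sub>R u s) L)) has_real_derivative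
      (- 2 * real L * (norm ((r t / norm (u t)) *\<^sub>R u t))\<^sup>2 * lossL L A b ((r t / norm (u t)) *\<^sub>R u t))) (at t)"
  proof (rule has_field_derivative_transform_within_open[OF Ed'[unfolded val] open_greaterThan[of 0]])
    show "t \<in> {0<..}" using t by simp
    fix s :: real assume "s \<in> {0<..}"
    then have s: "s \<ge> 0" by simp
    show "E s = bregman L z (epow ((r s / norm (u s)) *\<^sub>R u s) L)"
    proof -
      have xp: "\<forall>i. 0 < X s $ i" using Xpos[OF s] by blast
      show ?thesis unfolding Xeq[OF s] E_def by (rule sym[OF bregman_eq[OF xp hL]])
    qed
  qed
qed

end
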